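(* Let $R$ be a semiring and $f, g: N \to M$ two homomorphisms of left $R$-semimodules. Define $m \sim_{(f,g)} m'$ if and only if there exist $k \ge 1$, elements $m_1, \ldots, m_k \in M$ and $n_1, \ldots, n_k, n'_1, \ldots, n'_k \in N$ such that $m = m_1 + f(n_1) + g(n'_1)$, $m_i + f(n'_i) + g(n_i) = m_{i+1} + f(n_{i+1}) + g(n'_{i+1})$ for $1 \le i \le k-1$, and $m_k + f(n'_k) + g(n_k) = m'$. Then $\sim_{(f,g)}$ is a congruence relation on $M$.
   Context: A semiring $R$ is a commutative monoid $(R,+,0)$ with an associative multiplication with unit $1$, distributive on both sides, and with $0r = 0 = r0$. A left $R$-semimodule is a commutative monoid $(M,+,0)$ with a map $R\times M \to M$ satisfying $(rr')m = r(r'm)$, $(r+r')m = rm + r'm$, $r(m+m') = rm + rm'$, $1m = m$, $0m = 0 = r0$. A homomorphism of left $R$-semimodules is an additive map $f$ with $f(rm) = rf(m)$. A congruence relation on $M$ is an equivalence relation $\sim$ such that $m \sim m'$ implies $m + n \sim m' + n$ and $rm \sim rm'$ for all $n \in M$, $r \in R$. *)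

theory Defs
  imports Main
begin

definition semiring :: "('r \<Rightarrow> 'r \<Rightarrow> 'r) \<Rightarrow> 'r \<Rightarrow> ('r \<Rightarrow> 'r \<Rightarrow> 'r) \<Rightarrow> 'r \<Rightarrow> bool" where
  "semiring add zero mul one \<longleftrightarrow>
     (\<forall>a b c. add (add a b) c = add a (add b c)) \<and>
     (\<forall>a b. add a b = add b a) \<and>
     (\<forall>a. add zero a = a) \<and>
     (\<forall>a b c. mul (mul a b) c = mul a (mul b c)) \<and>
     (\<forall>a. mul one a = a \<and> mul a one = a) \<and>
     (\<forall>a b c. mul a (add b c) = add (mul a b) (mul a c)) \<and>
     (\<forall>a b c. mul (add a b) c = add (mul a c) (mul b c)) \<and>
     (\<forall>a. mul zero a = zero \<and> mul a zero = zero)"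

definition semimodule ::
  "('r \<Rightarrow> 'r \<Rightarrow> 'r) \<Rightarrow> 'r \<Rightarrow> ('r \<Rightarrow> 'r \<Rightarrow> 'r) \<Rightarrow> 'r \<Rightarrow>
   ('m \<Rightarrow> 'm \<Rightarrow> 'm) \<Rightarrow> 'm \<Rightarrow> ('r \<Rightarrow> 'm \<Rightarrow> 'm) \<Rightarrow> bool" where
  "semimodule radd rzero rmul rone madd mzero smul \<longleftrightarrow>
     semiring radd rzero rmul rone \<and>
     (\<forall>a b c. madd (madd a b) c = madd a (madd b c)) \<and>
     (\<forall>a b. madd a b = madd b a) \<and>
     (\<forall>a. madd mzero a = a) \<and>
     (\<forall>r r' m. smul (rmul r r') m = smul r (smul r' m)) \<and>
     (\<forall>r r' m. smul (radd r r') m = madd (smul r m) (smul r' m)) \<and>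
     (\<forall>r m m'. smul r (madd m m') = madd (smul r m) (smul r m')) \<and>
     (\<forall>m. smul rone m = m) \<and>
     (\<forall>m. smul rzero m = mzero) \<and>
     (\<forall>r. smul r mzero = mzero)"

definition semimodule_hom ::
  "('n \<Rightarrow> 'n \<Rightarrow> 'n) \<Rightarrow> ('r \<Rightarrow> 'n \<Rightarrow> 'n) \<Rightarrow>
   ('m \<Rightarrow> 'm \<Rightarrow> 'm) \<Rightarrow> ('r \<Rightarrow> 'm \<Rightarrow> 'm) \<Rightarrow> ('n \<Rightarrow> 'm) \<Rightarrow> bool" where
  "semimodule_hom nadd nsmul madd msmul h \<longleftrightarrow>
     (\<forall>x y. h (nadd x y) = madd (h x) (h y)) \<and>
     (\<forall>r x. h (nsmul r x) = msmul r (h x))"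

definition semimodule_congruence ::
  "('m \<Rightarrow> 'm \<Rightarrow> 'm) \<Rightarrow> ('r \<Rightarrow> 'm \<Rightarrow> 'm) \<Rightarrow> ('m \<Rightarrow> 'm \<Rightarrow> bool) \<Rightarrow> bool" where
  "semimodule_congruence madd smul rel \<longleftrightarrow>
     equivp rel \<and>
     (\<forall>m m' n. rel m m' \<longrightarrow> rel (madd m n) (madd m' n)) \<and>
     (\<forall>m m' r. rel m m' \<longrightarrow> rel (smul r m) (smul r m'))"

text \<open>The relation \<sim>_(f,g): chains indexed by 1..k.\<close>
definition fg_rel ::
  "('m \<Rightarrow> 'm \<Rightarrow> 'm) \<Rightarrow> ('n \<Rightarrow> 'm) \<Rightarrow> ('n \<Rightarrow> 'm) \<Rightarrow> 'm \<Rightarrow> 'm \<Rightarrow> bool" where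
  "fg_rel madd f g m m' \<longleftrightarrow>
     (\<exists>(k::nat) (ms::nat \<Rightarrow> 'm) (ns::nat \<Rightarrow> 'n) (ns'::nat \<Rightarrow> 'n).
        k \<ge> 1 \<and>
        m = madd (madd (ms 1) (f (ns 1))) (g (ns' 1)) \<and>
        (\<forall>i. 1 \<le> i \<and> i \<le> k - 1 \<longrightarrow>
           madd (madd (ms i) (f (ns' i))) (g (ns i)) =
           madd (madd (ms (i+1)) (f (ns (i+1)))) (g (ns' (i+1)))) \<and>
        madd (madd (ms k) (f (ns' k))) (g (ns k)) = m')"

end

theory Submission
  imports Defs
begin

lemma fg_sym:
  fixes f g :: "'n \<Rightarrow> 'm"
  assumes "fg_rel madd f g m m'" shows "fg_rel madd f g m' m"
proof -
  from assms obtain k ms and ns ns' :: "nat \<Rightarrow> 'n" where k: "k \<ge> 1"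
    and s: "m = madd (madd (ms 1) (f (ns 1))) (g (ns' 1))"
    and st: "\<forall>i. 1 \<le> i \<and> i \<le> k - 1 \<longrightarrow>
           madd (madd (ms i) (f (ns' i))) (g (ns i)) =
           madd (madd (ms (i+1)) (f (ns (i+1)))) (g (ns' (i+1)))"
    and e: "madd (madd (ms k) (f (ns' k))) (g (ns k)) = m'"
    unfolding fg_rel_def by blast
  have mid: "\<forall>i. 1 \<le> i \<and> i \<le> k - 1 \<longrightarrow>
     madd (madd (ms (k + 1 - i)) (f (ns (k + 1 - i)))) (g (ns' (k + 1 - i))) =
         madd (madd (ms (k + 1 - (i + 1))) (f (ns' (k + 1 - (i + 1))))) (g (ns (k + 1 - (i + 1))))"
  proof (intro allI impI)
    fix i assume i: "1 \<le> i \<and> i \<le> k - 1"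
    have h: "1 \<le> k - i \<and> k - i \<le> k - 1" using i by auto
    have e1: "k - i + 1 = k + 1 - i" and e2: "k + 1 - (i+1) = k - i" using i by auto
    from st h have "madd (madd (ms (k-i)) (f (ns' (k-i)))) (g (ns (k-i))) =
           madd (madd (ms (k-i+1)) (f (ns (k-i+1)))) (g (ns' (k-i+1)))" by blast
    then show "madd (madd (ms (k + 1 - i)) (f (ns (k + 1 - i)))) (g (ns' (k + 1 - i))) =
         madd (madd (ms (k + 1 - (i + 1))) (f (ns' (k + 1 - (i + 1))))) (g (ns (k + 1 - (i + 1))))"
      unfolding e1 e2 by simp
  qed
  have e': "m' = madd (madd (ms (k + 1 - 1)) (f (ns' (k + 1 - 1)))) (g (ns (k + 1 - 1)))"
    using e by simp
  have s': "madd (madd (ms (k + 1 - k)) (f (ns (k + 1 - k)))) (g (ns' (k + 1 - k))) = m"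
    using s k by simp
  show ?thesis unfolding fg_rel_def
    apply (rule exI[of _ k], rule exI[of _ "\<lambda>i. ms (k+1-i)"], rule exI[of _ "\<lambda>i. ns' (k+1-i)"],
      rule exI[of _ "\<lambda>i. ns (k+1-i)"])
    using k mid e' s' by blast
qed

lemma fg_trans:
  fixes f g :: "'n \<Rightarrow> 'm"
  assumes "fg_rel madd f g m m'" "fg_rel madd f g m' m''" shows "fg_rel madd f g m m''"
proof -
  from assms(1) obtain k ms and ns ns' :: "nat \<Rightarrow> 'n" where k: "k \<ge> 1"
    and s: "m = madd (madd (ms 1) (f (ns 1))) (g (ns' 1))"
    and st: "\<forall>i. 1 \<le> i \<and> i \<le> k - 1 \<longrightarrow>
           madd (madd (ms i) (f (ns' i))) (g (ns i)) =
           madd (madd (ms (i+1)) (f (ns (i+1)))) (g (ns' (i+1)))"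
    and e: "madd (madd (ms k) (f (ns' k))) (g (ns k)) = m'"
    unfolding fg_rel_def by blast
  from assms(2) obtain l ms2 and ns2 ns2' :: "nat \<Rightarrow> 'n" where l: "l \<ge> 1"
    and s2: "m' = madd (madd (ms2 1) (f (ns2 1))) (g (ns2' 1))"
    and st2: "\<forall>i. 1 \<le> i \<and> i \<le> l - 1 \<longrightarrow>
           madd (madd (ms2 i) (f (ns2' i))) (g (ns2 i)) =
           madd (madd (ms2 (i+1)) (f (ns2 (i+1)))) (g (ns2' (i+1)))"
    and e2: "madd (madd (ms2 l) (f (ns2' l))) (g (ns2 l)) = m''"
    unfolding fg_rel_def by blast
  define MS where "MS = (\<lambda>i. if i \<le> k then ms i else ms2 (i-k))"
  define NS where "NS = (\<lambda>i. if i \<le> k then ns i else ns2 (i-k))"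
  define NS' where "NS' = (\<lambda>i. if i \<le> k then ns' i else ns2' (i-k))"
  have mid: "\<forall>i. 1 \<le> i \<and> i \<le> k + l - 1 \<longrightarrow>
     madd (madd (MS i) (f (NS' i))) (g (NS i)) =
           madd (madd (MS (i+1)) (f (NS (i+1)))) (g (NS' (i+1)))"
  proof (intro allI impI)
    fix i assume i: "1 \<le> i \<and> i \<le> k + l - 1"
    consider "i < k" | "i = k" | "i > k" by linarith
    then show "madd (madd (MS i) (f (NS' i))) (g (NS i)) =
           madd (madd (MS (i+1)) (f (NS (i+1)))) (g (NS' (i+1)))"
    proof cases
      case 1 then show ?thesis using st i by (simp add: MS_def NS_def NS'_def)
    next
      case 2 then show ?thesis using e s2 by (simp add: MS_def NS_def NS'_def)
    next
      case 3
      have h: "1 \<le> i - k \<and> i - k \<le> l - 1" using 3 i by auto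
      have ee: "i + 1 - k = i - k + 1" using 3 by auto
      show ?thesis using 3 st2 h unfolding MS_def NS_def NS'_def ee by simp
    qed
  qed
  have s': "m = madd (madd (MS 1) (f (NS 1))) (g (NS' 1))" using s k by (simp add: MS_def NS_def NS'_def)
  have e': "madd (madd (MS (k+l)) (f (NS' (k+l)))) (g (NS (k+l))) = m''"
    using e2 l by (simp add: MS_def NS_def NS'_def)
  show ?thesis unfolding fg_rel_def
    apply (rule exI[of _ "k+l"], rule exI[of _ MS], rule exI[of _ NS], rule exI[of _ NS'])
    using k mid s' e' by simp
qed

theorem lemma2p12:
  fixes radd rmul :: "'r \<Rightarrow> 'r \<Rightarrow> 'r" and rzero rone :: 'r
    and nadd :: "'n \<Rightarrow> 'n \<Rightarrow> 'n" and nzero :: 'n and nsmul :: "'r \<Rightarrow> 'n \<Rightarrow> 'n"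
    and madd :: "'m \<Rightarrow> 'm \<Rightarrow> 'm" and mzero :: 'm and msmul :: "'r \<Rightarrow> 'm \<Rightarrow> 'm"
    and f g :: "'n \<Rightarrow> 'm"
  assumes "semiring radd rzero rmul rone"
    and "semimodule radd rzero rmul rone nadd nzero nsmul"
    and "semimodule radd rzero rmul rone madd mzero msmul"
    and "semimodule_hom nadd nsmul madd msmul f"
    and "semimodule_hom nadd nsmul madd msmul g"
  shows "semimodule_congruence madd msmul (fg_rel madd f g)"
proof -
  interpret madd: comm_monoid madd mzero
    using assms(3) unfolding semimodule_def
    by unfold_locales auto
  have nz: "nsmul rzero nzero = nzero" using assms(2) unfolding semimodule_def by blast
  have f0: "f nzero = mzero" using assms(4) assms(3) nz unfolding semimodule_hom_def semimodule_def
    by metis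
  have g0: "g nzero = mzero" using assms(5) assms(3) nz unfolding semimodule_hom_def semimodule_def
    by metis
  have sd: "\<And>r a b. msmul r (madd a b) = madd (msmul r a) (msmul r b)"
    using assms(3) unfolding semimodule_def by blast
  have fs: "\<And>r x. f (nsmul r x) = msmul r (f x)" "\<And>r x. g (nsmul r x) = msmul r (g x)"
    using assms(4,5) unfolding semimodule_hom_def by auto
  have refl: "fg_rel madd f g m m" for m
    unfolding fg_rel_def
    by (rule exI[of _ 1], rule exI[of _ "\<lambda>_. m"], rule exI[of _ "\<lambda>_. nzero"],
        rule exI[of _ "\<lambda>_. nzero"]) (simp add: f0 g0)
  have eq: "equivp (fg_rel madd f g)"
    by (rule equivpI) (auto simp: reflp_def symp_def transp_def intro: refl fg_sym fg_trans)
  have add: "fg_rel madd f g (madd m n) (madd m' n)" if "fg_rel madd f g m m'" for m m' n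
  proof -
    from that obtain k ms and ns ns' :: "nat \<Rightarrow> 'n" where k: "k \<ge> 1"
      and s: "m = madd (madd (ms 1) (f (ns 1))) (g (ns' 1))"
      and st: "\<forall>i. 1 \<le> i \<and> i \<le> k - 1 \<longrightarrow>
             madd (madd (ms i) (f (ns' i))) (g (ns i)) =
             madd (madd (ms (i+1)) (f (ns (i+1)))) (g (ns' (i+1)))"
      and e: "madd (madd (ms k) (f (ns' k))) (g (ns k)) = m'"
      unfolding fg_rel_def by blast
    have r: "\<And>a b c. madd (madd (madd a n) b) c = madd (madd (madd a b) c) n"
      by (simp add: madd.assoc madd.commute madd.left_commute)
    show ?thesis unfolding fg_rel_def
      apply (rule exI[of _ k], rule exI[of _ "\<lambda>i. madd (ms i) n"], rule exI[of _ ns],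
          rule exI[of _ ns'])
      using k s st e by (simp add: r)
  qed
  have sm: "fg_rel madd f g (msmul r m) (msmul r m')" if "fg_rel madd f g m m'" for m m' r
  proof -
    from that obtain k ms and ns ns' :: "nat \<Rightarrow> 'n" where k: "k \<ge> 1"
      and s: "m = madd (madd (ms 1) (f (ns 1))) (g (ns' 1))"
      and st: "\<forall>i. 1 \<le> i \<and> i \<le> k - 1 \<longrightarrow>
             madd (madd (ms i) (f (ns' i))) (g (ns i)) =
             madd (madd (ms (i+1)) (f (ns (i+1)))) (g (ns' (i+1)))"
      and e: "madd (madd (ms k) (f (ns' k))) (g (ns k)) = m'"
      unfolding fg_rel_def by blast
    show ?thesis unfolding fg_rel_def
      apply (rule exI[of _ k], rule exI[of _ "\<lambda>i. msmul r (ms i)"],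
          rule exI[of _ "\<lambda>i. nsmul r (ns i)"], rule exI[of _ "\<lambda>i. nsmul r (ns' i)"])
      using k s st e by (auto simp: fs sd[symmetric])
  qed
  show ?thesis unfolding semimodule_congruence_def using eq add sm by blast
qed

end
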